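(* Every flat ado-semilattice is simple, hence subdirectly irreducible.
   Context: A flat ado-semilattice is an algebra $(S,\sqcup,\cap)$ with an element $0\in S$ such that $a\cap a=a$, $0\cap a=a\cap 0=0$ for all $a$, $a\cap b=0$ for distinct $a,b$, $0\sqcup a=a$ for all $a$, and $a\sqcup b=a$ whenever $a\neq 0$ (so the order is flat: $0$ is least and all other elements are maximal). An algebra is simple if every homomorphism from it into an algebra of the same type is either injective or constant. *)

theory Defs
  imports Main
begin

definition algebra22 :: "'a set \<Rightarrow> ('a \<Rightarrow> 'a \<Rightarrow> 'a) \<Rightarrow> ('a \<Rightarrow> 'a \<Rightarrow> 'a) \<Rightarrow> bool" where
  "algebra22 S jn mt \<longleftrightarrow> (\<forall>a\<in>S. \<forall>b\<in>S. jn a b \<in> S \<and> mt a b \<in> S)"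

definition flat_ado_semilattice ::
  "'a set \<Rightarrow> ('a \<Rightarrow> 'a \<Rightarrow> 'a) \<Rightarrow> ('a \<Rightarrow> 'a \<Rightarrow> 'a) \<Rightarrow> 'a \<Rightarrow> bool" where
  "flat_ado_semilattice S jn mt z \<longleftrightarrow>
     algebra22 S jn mt \<and> z \<in> S \<and>
     (\<forall>a\<in>S. mt a a = a) \<and>
     (\<forall>a\<in>S. mt z a = z \<and> mt a z = z) \<and>
     (\<forall>a\<in>S. \<forall>b\<in>S. a \<noteq> b \<longrightarrow> mt a b = z) \<and>
     (\<forall>a\<in>S. jn z a = a) \<and>
     (\<forall>a\<in>S. \<forall>b\<in>S. a \<noteq> z \<longrightarrow> jn a b = a)"

definition hom22 ::
  "'a set \<Rightarrow> ('a \<Rightarrow> 'a \<Rightarrow> 'a) \<Rightarrow> ('a \<Rightarrow> 'a \<Rightarrow> 'a) \<Rightarrow>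
   'b set \<Rightarrow> ('b \<Rightarrow> 'b \<Rightarrow> 'b) \<Rightarrow> ('b \<Rightarrow> 'b \<Rightarrow> 'b) \<Rightarrow> ('a \<Rightarrow> 'b) \<Rightarrow> bool" where
  "hom22 S jn mt T jn' mt' h \<longleftrightarrow>
     (\<forall>a\<in>S. h a \<in> T) \<and>
     (\<forall>a\<in>S. \<forall>b\<in>S. h (jn a b) = jn' (h a) (h b) \<and> h (mt a b) = mt' (h a) (h b))"

definition simple22 ::
  "'b itself \<Rightarrow> 'a set \<Rightarrow> ('a \<Rightarrow> 'a \<Rightarrow> 'a) \<Rightarrow> ('a \<Rightarrow> 'a \<Rightarrow> 'a) \<Rightarrow> bool" where
  "simple22 (_::'b itself) S jn mt \<longleftrightarrow>
     (\<forall>(T::'b set) jn' mt' h. algebra22 T jn' mt' \<and> hom22 S jn mt T jn' mt' h \<longrightarrow>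
        inj_on h S \<or> (\<exists>c. \<forall>a\<in>S. h a = c))"

definition subdirectly_irreducible22 ::
  "'i itself \<Rightarrow> 'b itself \<Rightarrow> 'a set \<Rightarrow> ('a \<Rightarrow> 'a \<Rightarrow> 'a) \<Rightarrow> ('a \<Rightarrow> 'a \<Rightarrow> 'a) \<Rightarrow> bool" where
  "subdirectly_irreducible22 (_::'i itself) (_::'b itself) S jn mt \<longleftrightarrow>
     (\<forall>(I::'i set) (T::'i \<Rightarrow> 'b set) jn' mt' (h::'i \<Rightarrow> 'a \<Rightarrow> 'b).
        I \<noteq> {} \<and>
        (\<forall>i\<in>I. algebra22 (T i) (jn' i) (mt' i) \<and> hom22 S jn mt (T i) (jn' i) (mt' i) (h i)
                \<and> h i ` S = T i) \<and>
        (\<forall>a\<in>S. \<forall>b\<in>S. (\<forall>i\<in>I. h i a = h i b) \<longrightarrow> a = b)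
        \<longrightarrow> (\<exists>i\<in>I. inj_on (h i) S))"

end

theory Submission
  imports Defs
begin

lemma flat_hom_const:
  assumes F: "flat_ado_semilattice S jn mt z"
    and H: "hom22 S jn mt T jn' mt' h"
    and ab: "a \<in> S" "b \<in> S" "a \<noteq> b" "h a = h b"
  shows "\<exists>c. \<forall>x\<in>S. h x = c"
proof -
  have zS: "z \<in> S" using F by (simp add: flat_ado_semilattice_def)
  have key: "\<forall>x\<in>S. h x = h a'" if a': "a' \<in> S" "a' \<noteq> z" "h a' = h z" for a'
  proof
    fix x assume x: "x \<in> S"
    have "h x = h (jn z x)" using F x by (simp add: flat_ado_semilattice_def)
    also have "\<dots> = jn' (h z) (h x)" using H zS x by (simp add: hom22_def)
    also have "\<dots> = jn' (h a') (h x)" using that by simp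
    also have "\<dots> = h (jn a' x)" using H a' x by (simp add: hom22_def)
    also have "\<dots> = h a'" using F a' x by (simp add: flat_ado_semilattice_def)
    finally show "h x = h a'" .
  qed
  show ?thesis
  proof (cases "a = z \<or> b = z")
    case True
    then show ?thesis
    proof
      assume "a = z" hence "\<forall>x\<in>S. h x = h b" using key[of b] ab by metis
      thus ?thesis by blast
    next
      assume "b = z" hence "\<forall>x\<in>S. h x = h a" using key[of a] ab by metis
      thus ?thesis by blast
    qed
  next
    case False
    have "h a = h (mt a a)" using F ab by (simp add: flat_ado_semilattice_def)
    also have "\<dots> = mt' (h a) (h a)" using H ab by (simp add: hom22_def)
    also have "\<dots> = mt' (h a) (h b)" using ab by simp
    also have "\<dots> = h (mt a b)" using H ab by (simp add: hom22_def)
    also have "\<dots> = h z" using F ab by (simp add: flat_ado_semilattice_def)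
    finally have "\<forall>x\<in>S. h x = h a" using key[of a] ab False by metis
    thus ?thesis by blast
  qed
qed

lemma flat_simple:
  assumes F: "flat_ado_semilattice S jn mt z"
    and H: "hom22 S jn mt T jn' mt' h"
  shows "inj_on h S \<or> (\<exists>c. \<forall>a\<in>S. h a = c)"
proof (cases "inj_on h S")
  case False
  then obtain a b where "a \<in> S" "b \<in> S" "a \<noteq> b" "h a = h b" by (auto simp: inj_on_def)
  then show ?thesis using flat_hom_const[OF F H] by blast
qed simp

theorem corollary4p8:
  fixes S :: "'a set" and jn mt :: "'a \<Rightarrow> 'a \<Rightarrow> 'a" and z :: 'a
  assumes "flat_ado_semilattice S jn mt z"
  shows "simple22 TYPE('b) S jn mt \<and> subdirectly_irreducible22 TYPE('i) TYPE('b) S jn mt"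
proof
  show "simple22 TYPE('b) S jn mt"
    unfolding simple22_def
  proof (intro allI impI)
    fix T :: "'b set" and jn' mt' h
    assume "algebra22 T jn' mt' \<and> hom22 S jn mt T jn' mt' h"
    thus "inj_on h S \<or> (\<exists>c. \<forall>a\<in>S. h a = c)" using flat_simple[OF assms] by blast
  qed
  show "subdirectly_irreducible22 TYPE('i) TYPE('b) S jn mt"
    unfolding subdirectly_irreducible22_def
  proof (intro allI impI)
    fix I :: "'i set" and T :: "'i \<Rightarrow> 'b set" and jn' mt' and h :: "'i \<Rightarrow> 'a \<Rightarrow> 'b"
    assume A: "I \<noteq> {} \<and>
        (\<forall>i\<in>I. algebra22 (T i) (jn' i) (mt' i) \<and> hom22 S jn mt (T i) (jn' i) (mt' i) (h i)
                \<and> h i ` S = T i) \<and>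
        (\<forall>a\<in>S. \<forall>b\<in>S. (\<forall>i\<in>I. h i a = h i b) \<longrightarrow> a = b)"
    show "\<exists>i\<in>I. inj_on (h i) S"
    proof (rule ccontr)
      assume N: "\<not> (\<exists>i\<in>I. inj_on (h i) S)"
      have C: "\<forall>i\<in>I. \<exists>c. \<forall>a\<in>S. h i a = c"
      proof
        fix i assume i: "i \<in> I"
        hence "hom22 S jn mt (T i) (jn' i) (mt' i) (h i)" using A by blast
        from flat_simple[OF assms this] show "\<exists>c. \<forall>a\<in>S. h i a = c" using N i by blast
      qed
      have "\<forall>a\<in>S. \<forall>b\<in>S. a = b"
      proof (intro ballI)
        fix a b assume "a \<in> S" "b \<in> S"
        moreover have "\<forall>i\<in>I. h i a = h i b" 
        proof
          fix i assume "i \<in> I"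
          then obtain c where "\<forall>a\<in>S. h i a = c" using C by blast
          thus "h i a = h i b" using \<open>a \<in> S\<close> \<open>b \<in> S\<close> by simp
        qed
        ultimately show "a = b" using A by blast
      qed
      hence "inj_on (h i) S" for i by (auto simp: inj_on_def)
      thus False using N A by blast
    qed
  qed
qed

end
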